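(* Let $k\ge 2$, and let $p,q,\rho$ be real parameters with $p+(k-1)q=1$ such that all quantities below are nonnegative. Consider $k$-JRR: $n$ contributors with values in $[k]=\{1,\dots,k\}$ are partitioned into disjoint groups of two, and a group whose true values are $(v_1,v_2)$ reports $(v_1',v_2')\in[k]^2$ with probability $p^2+\rho pq$ if $v_1'=v_1,v_2'=v_2$; $pq-\frac{1}{k-1}\rho pq$ if $v_1'=v_1,v_2'\ne v_2$; $pq-\frac{1}{k-1}\rho pq$ if $v_1'\ne v_1,v_2'=v_2$; and $q^2+\frac{1}{(k-1)^2}\rho pq$ if $v_1'\ne v_1,v_2'\ne v_2$. Then each contributor reports its true value with probability $p$ and each specific other value with probability $q$. Consequently, if $n_v$ is the number of contributors with true value $v$ and $I_v$ the number of reports equal to $v$, then $\hat n_v=(I_v-nq)/(p-q)$ satisfies $\mathrm{E}[\hat n_v]=n_v$ for every $v\in[k]$ (assuming $p\ne q$). *)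

theory Defs
  imports "HOL-Probability.Probability"
begin

definition jrr_prob :: "nat \<Rightarrow> real \<Rightarrow> real \<Rightarrow> real \<Rightarrow> nat \<Rightarrow> nat \<Rightarrow> nat \<Rightarrow> nat \<Rightarrow> real" where
  "jrr_prob k p q \<rho> v1 v2 a b =
     (if a \<in> {1..k} \<and> b \<in> {1..k} then
        (if a = v1 \<and> b = v2 then p^2 + \<rho>*p*q
         else if a = v1 \<and> b \<noteq> v2 then p*q - \<rho>*p*q / (real k - 1)
         else if a \<noteq> v1 \<and> b = v2 then p*q - \<rho>*p*q / (real k - 1)
         else q^2 + \<rho>*p*q / (real k - 1)^2)
      else 0)"

end

theory Submission
  imports Defs "HOL-Probability.Probability"
begin

lemma marg:
  fixes Ri Rj :: "'a \<Rightarrow> nat"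
  assumes "prob_space M"
    and mi: "Ri \<in> measurable M (count_space UNIV)"
    and mj: "Rj \<in> measurable M (count_space UNIV)"
    and f: "\<forall>a b. measure M {\<omega> \<in> space M. Ri \<omega> = a \<and> Rj \<omega> = b} = f a b"
    and z: "\<forall>a b. b \<notin> S \<longrightarrow> f a b = 0" and "finite S"
  shows "measure M {\<omega> \<in> space M. Ri \<omega> = a} = (\<Sum>b\<in>S. f a b)"
proof -
  interpret P: prob_space M by fact
  define A where "A b = {\<omega> \<in> space M. Ri \<omega> = a \<and> Rj \<omega> = b}" for b
  have As: "A b \<in> sets M" for b unfolding A_def using mi mj by measurable
  have eq: "{\<omega> \<in> space M. Ri \<omega> = a} = (\<Union>b\<in>S. A b) \<union> (\<Union>b\<in>-S. A b)"
    unfolding A_def by auto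
  have "A b \<in> null_sets M" if "b \<in> -S" for b
  proof -
    have "measure M (A b) = 0" using f z that unfolding A_def by auto
    then show ?thesis using As by (simp add: P.emeasure_eq_measure null_setsI)
  qed
  then have N: "(\<Union>b\<in>-S. A b) \<in> null_sets M" by (intro null_sets_UN') auto
  have "measure M {\<omega> \<in> space M. Ri \<omega> = a} = measure M (\<Union>b\<in>S. A b)"
    unfolding eq using N As by (intro measure_Un_null_set) auto
  also have "\<dots> = (\<Sum>b\<in>S. measure M (A b))"
    using As \<open>finite S\<close> by (intro P.finite_measure_finite_Union) (auto simp: disjoint_family_on_def A_def)
  also have "\<dots> = (\<Sum>b\<in>S. f a b)" using f unfolding A_def by simp
  finally show ?thesis .
qed

lemma jrr_sum1:
  assumes "k \<ge> 2" "u2 \<in> {1..k}" "w \<in> {1..k}" "p + (real k - 1) * q = 1"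
  shows "(\<Sum>b\<in>{1..k}. jrr_prob k p q \<rho> u1 u2 w b) = (if w = u1 then p else q)"
proof -
  have k: "real k - 1 \<noteq> 0" using assms by auto
  have c: "card ({1..k} - {u2}) = k - 1" using assms by auto
  have "(\<Sum>b\<in>{1..k}. jrr_prob k p q \<rho> u1 u2 w b) = jrr_prob k p q \<rho> u1 u2 w u2
     + (\<Sum>b\<in>{1..k}-{u2}. jrr_prob k p q \<rho> u1 u2 w b)"
    using assms by (subst sum.remove) auto
  also have "(\<Sum>b\<in>{1..k}-{u2}. jrr_prob k p q \<rho> u1 u2 w b) = (\<Sum>b\<in>{1..k}-{u2}.
      (if w = u1 then p*q - \<rho>*p*q / (real k - 1) else q^2 + \<rho>*p*q / (real k - 1)^2))"
    using assms by (intro sum.cong) (auto simp: jrr_prob_def)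
  also have "\<dots> = (real k - 1) * (if w = u1 then p*q - \<rho>*p*q / (real k - 1) else q^2 + \<rho>*p*q / (real k - 1)^2)"
    using c assms by (simp add: of_nat_diff)
  finally have S: "(\<Sum>b\<in>{1..k}. jrr_prob k p q \<rho> u1 u2 w b) = jrr_prob k p q \<rho> u1 u2 w u2 + (real k - 1) * (if w = u1 then p*q - \<rho>*p*q / (real k - 1) else q^2 + \<rho>*p*q / (real k - 1)^2)" .
  show ?thesis
  proof (cases "w = u1")
    case True
    have "(real k - 1) * (p*q - \<rho>*p*q / (real k - 1)) = (real k - 1) * p * q - \<rho>*p*q"
      using k by (simp add: field_simps)
    then show ?thesis using S True assms unfolding jrr_prob_def
      by (simp add: power2_eq_square) (metis (no_types, lifting) assms(4) distrib_left mult.commute mult.left_commute mult_1_right)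
  next
    case False
    have "(real k - 1) * (q^2 + \<rho>*p*q / (real k - 1)^2) = (real k - 1) * q^2 + \<rho>*p*q / (real k - 1)"
    proof -
      have "\<And>d a b::real. d \<noteq> 0 \<Longrightarrow> d * (a + b / d^2) = d * a + b / d"
        by (simp add: field_simps power2_eq_square)
      then show ?thesis using k by blast
    qed
    moreover have "jrr_prob k p q \<rho> u1 u2 w u2 = p*q - \<rho>*p*q / (real k - 1)"
      using False assms unfolding jrr_prob_def by auto
    moreover have "p*q + (real k - 1) * q^2 = q * (p + (real k - 1) * q)"
      by (simp add: algebra_simps power2_eq_square)
    ultimately show ?thesis using S False assms(4) by simp
  qed
qed

lemma jrr_sum2:
  assumes "k \<ge> 2" "u1 \<in> {1..k}" "w \<in> {1..k}" "p + (real k - 1) * q = 1"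
  shows "(\<Sum>a\<in>{1..k}. jrr_prob k p q \<rho> u1 u2 a w) = (if w = u2 then p else q)"
proof -
  have k: "real k - 1 \<noteq> 0" using assms by auto
  have c: "card ({1..k} - {u1}) = k - 1" using assms by auto
  have "(\<Sum>a\<in>{1..k}. jrr_prob k p q \<rho> u1 u2 a w) = jrr_prob k p q \<rho> u1 u2 u1 w
     + (\<Sum>a\<in>{1..k}-{u1}. jrr_prob k p q \<rho> u1 u2 a w)"
    using assms by (subst sum.remove) auto
  also have "(\<Sum>a\<in>{1..k}-{u1}. jrr_prob k p q \<rho> u1 u2 a w) = (\<Sum>a\<in>{1..k}-{u1}.
      (if w = u2 then p*q - \<rho>*p*q / (real k - 1) else q^2 + \<rho>*p*q / (real k - 1)^2))"
    using assms by (intro sum.cong) (auto simp: jrr_prob_def)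
  also have "\<dots> = (real k - 1) * (if w = u2 then p*q - \<rho>*p*q / (real k - 1) else q^2 + \<rho>*p*q / (real k - 1)^2)"
    using c assms by (simp add: of_nat_diff)
  finally have S: "(\<Sum>a\<in>{1..k}. jrr_prob k p q \<rho> u1 u2 a w) = jrr_prob k p q \<rho> u1 u2 u1 w + (real k - 1) * (if w = u2 then p*q - \<rho>*p*q / (real k - 1) else q^2 + \<rho>*p*q / (real k - 1)^2)" .
  show ?thesis
  proof (cases "w = u2")
    case True
    have "(real k - 1) * (p*q - \<rho>*p*q / (real k - 1)) = (real k - 1) * p * q - \<rho>*p*q"
      using k by (simp add: field_simps)
    then show ?thesis using S True assms unfolding jrr_prob_def
      by (simp add: power2_eq_square) (metis (no_types, lifting) assms(4) distrib_left mult.commute mult.left_commute mult_1_right)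
  next
    case False
    have "(real k - 1) * (q^2 + \<rho>*p*q / (real k - 1)^2) = (real k - 1) * q^2 + \<rho>*p*q / (real k - 1)"
    proof -
      have "\<And>d a b::real. d \<noteq> 0 \<Longrightarrow> d * (a + b / d^2) = d * a + b / d"
        by (simp add: field_simps power2_eq_square)
      then show ?thesis using k by blast
    qed
    moreover have "jrr_prob k p q \<rho> u1 u2 u1 w = p*q - \<rho>*p*q / (real k - 1)"
      using False assms unfolding jrr_prob_def by auto
    moreover have "p*q + (real k - 1) * q^2 = q * (p + (real k - 1) * q)"
      by (simp add: algebra_simps power2_eq_square)
    ultimately show ?thesis using S False assms(4) by simp
  qed
qed

theorem mainTheorem9:
  fixes M :: "'a measure"
    and k n :: nat and p q \<rho> :: real
    and x :: "nat \<Rightarrow> nat"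
    and G :: "(nat \<times> nat) set"
    and R :: "nat \<Rightarrow> 'a \<Rightarrow> nat"
  assumes "prob_space M"
    and "k \<ge> 2"
    and "p + (real k - 1) * q = 1"
    and "p \<ge> 0" and "q \<ge> 0"
    and "p^2 + \<rho>*p*q \<ge> 0"
    and "p*q - \<rho>*p*q / (real k - 1) \<ge> 0"
    and "q^2 + \<rho>*p*q / (real k - 1)^2 \<ge> 0"
    and "\<forall>i<n. x i \<in> {1..k}"
    and "\<forall>g\<in>G. fst g < n \<and> snd g < n \<and> fst g \<noteq> snd g"
    and "\<forall>i<n. \<exists>!g\<in>G. i = fst g \<or> i = snd g"
    and "\<forall>i<n. R i \<in> measurable M (count_space UNIV)"
    and "\<forall>g\<in>G. \<forall>a b. measure M {\<omega> \<in> space M. R (fst g) \<omega> = a \<and> R (snd g) \<omega> = b}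
                      = jrr_prob k p q \<rho> (x (fst g)) (x (snd g)) a b"
    and "prob_space.indep_vars M (\<lambda>_. count_space UNIV)
           (\<lambda>g \<omega>. (R (fst g) \<omega>, R (snd g) \<omega>)) G"
  shows "(\<forall>i<n. \<forall>w\<in>{1..k}.
            measure M {\<omega> \<in> space M. R i \<omega> = w} = (if w = x i then p else q))
         \<and> (p \<noteq> q \<longrightarrow> (\<forall>v\<in>{1..k}.
            integral\<^sup>L M (\<lambda>\<omega>. (real (card {i. i < n \<and> R i \<omega> = v}) - real n * q) / (p - q))
              = real (card {i. i < n \<and> x i = v})))"
proof -
  interpret P: prob_space M by fact
  have Rm: "R i \<in> measurable M (count_space UNIV)" if "i < n" for i using assms(12) that by blast
  have meas: "{\<omega> \<in> space M. R i \<omega> = w} \<in> sets M" if "i < n" for i w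
    using Rm[OF that] by measurable
  have z: "\<forall>a b. b \<notin> {1..k} \<longrightarrow> jrr_prob k p q \<rho> u1 u2 a b = 0" for u1 u2
    by (simp add: jrr_prob_def)
  have z2: "\<forall>a b. b \<notin> {1..k} \<longrightarrow> jrr_prob k p q \<rho> u1 u2 b a = 0" for u1 u2
    by (simp add: jrr_prob_def)
  have marg1: "\<forall>i<n. \<forall>w\<in>{1..k}.
            measure M {\<omega> \<in> space M. R i \<omega> = w} = (if w = x i then p else q)"
  proof (intro allI impI ballI)
    fix i w assume i: "i < n" and w: "w \<in> {1..k}"
    obtain g where g: "g \<in> G" "i = fst g \<or> i = snd g" using assms(11) i by blast
    have fg: "fst g < n" "snd g < n" "fst g \<noteq> snd g" using assms(10) g by auto
    have xs: "x (fst g) \<in> {1..k}" "x (snd g) \<in> {1..k}" using assms(9) fg by auto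
    have J: "\<forall>a b. measure M {\<omega> \<in> space M. R (fst g) \<omega> = a \<and> R (snd g) \<omega> = b}
                      = jrr_prob k p q \<rho> (x (fst g)) (x (snd g)) a b" using assms(13) g by blast
    from g(2) show "measure M {\<omega> \<in> space M. R i \<omega> = w} = (if w = x i then p else q)"
    proof
      assume ii: "i = fst g"
      have "measure M {\<omega> \<in> space M. R (fst g) \<omega> = w} = (\<Sum>b\<in>{1..k}. jrr_prob k p q \<rho> (x (fst g)) (x (snd g)) w b)"
        by (rule marg[OF assms(1) Rm[OF fg(1)] Rm[OF fg(2)] J z]) simp
      also have "\<dots> = (if w = x (fst g) then p else q)"
        by (rule jrr_sum1) (use assms(2,3) w xs in auto)
      finally show ?thesis using ii by simp
    next
      assume ii: "i = snd g"
      have J': "\<forall>a b. measure M {\<omega> \<in> space M. R (snd g) \<omega> = a \<and> R (fst g) \<omega> = b}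
                      = jrr_prob k p q \<rho> (x (fst g)) (x (snd g)) b a" using J by (simp add: conj_commute)
      have "measure M {\<omega> \<in> space M. R (snd g) \<omega> = w} = (\<Sum>b\<in>{1..k}. jrr_prob k p q \<rho> (x (fst g)) (x (snd g)) b w)"
        by (rule marg[OF assms(1) Rm[OF fg(2)] Rm[OF fg(1)] J' z2]) simp
      also have "\<dots> = (if w = x (snd g) then p else q)"
        by (rule jrr_sum2) (use assms(2,3) w xs in auto)
      finally show ?thesis using ii by simp
    qed
  qed
  moreover have "p \<noteq> q \<longrightarrow> (\<forall>v\<in>{1..k}.
            integral\<^sup>L M (\<lambda>\<omega>. (real (card {i. i < n \<and> R i \<omega> = v}) - real n * q) / (p - q))
              = real (card {i. i < n \<and> x i = v}))"
  proof (intro impI ballI)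
    fix v assume pq: "p \<noteq> q" and v: "v \<in> {1..k}"
    define A where "A i = {\<omega> \<in> space M. R i \<omega> = v}" for i
    have cardsum: "real (card {i. i < n \<and> P i}) = (\<Sum>i<n. if P i then 1 else 0)" for P
    proof -
      have "{i. i < n \<and> P i} = {i \<in> {..<n}. P i}" by auto
      then show ?thesis by (simp add: sum.inter_filter[symmetric])
    qed
    have "integral\<^sup>L M (\<lambda>\<omega>. (real (card {i. i < n \<and> R i \<omega> = v}) - real n * q) / (p - q))
        = integral\<^sup>L M (\<lambda>\<omega>. \<Sum>i<n. (indicator (A i) \<omega> - q) / (p - q))"
    proof (rule Bochner_Integration.integral_cong[OF refl])
      fix \<omega> assume om: "\<omega> \<in> space M"
      have "real (card {i. i < n \<and> R i \<omega> = v}) = (\<Sum>i<n. indicator (A i) \<omega>)"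
        unfolding cardsum using om by (intro sum.cong) (auto simp: A_def indicator_def)
      then show "(real (card {i. i < n \<and> R i \<omega> = v}) - real n * q) / (p - q) = (\<Sum>i<n. (indicator (A i) \<omega> - q) / (p - q))"
        by (simp add: sum_divide_distrib[symmetric] sum_subtractf)
    qed
    also have "\<dots> = (\<Sum>i<n. integral\<^sup>L M (\<lambda>\<omega>. (indicator (A i) \<omega> - q) / (p - q)))"
    proof (intro Bochner_Integration.integral_sum)
      fix i assume i: "i \<in> {..<n}"
      have "integrable M (indicat_real (A i))"
        using meas[of i v] i by (intro integrable_real_indicator) (auto simp: A_def P.emeasure_eq_measure)
      then have "integrable M (\<lambda>\<omega>. indicat_real (A i) \<omega> - q)"
        by (intro Bochner_Integration.integrable_diff) auto
      then show "integrable M (\<lambda>\<omega>. (indicat_real (A i) \<omega> - q) / (p - q))"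
        by (intro integrable_divide_zero)
    qed
    also have "\<dots> = (\<Sum>i<n. if x i = v then 1 else 0)"
    proof (intro sum.cong refl)
      fix i assume i: "i \<in> {..<n}"
      have iA: "integrable M (indicat_real (A i))"
        using meas[of i v] i by (intro integrable_real_indicator) (auto simp: A_def P.emeasure_eq_measure)
      have "integral\<^sup>L M (\<lambda>\<omega>. indicator (A i) \<omega> - q) = integral\<^sup>L M (indicat_real (A i)) - integral\<^sup>L M (\<lambda>\<omega>. q)"
        using iA by (intro Bochner_Integration.integral_diff) auto
      also have "\<dots> = measure M (A i) - q"
        using meas[of i v] i by (simp add: A_def P.prob_space)
      finally have "integral\<^sup>L M (\<lambda>\<omega>. (indicator (A i) \<omega> - q) / (p - q)) = (measure M (A i) - q) / (p - q)"
        by simp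
      also have "\<dots> = (if x i = v then 1 else 0)"
        using marg1 i v pq unfolding A_def by auto
      finally show "integral\<^sup>L M (\<lambda>\<omega>. (indicator (A i) \<omega> - q) / (p - q)) = (if x i = v then 1 else 0)" .
    qed
    also have "\<dots> = real (card {i. i < n \<and> x i = v})" by (simp add: cardsum)
    finally show "integral\<^sup>L M (\<lambda>\<omega>. (real (card {i. i < n \<and> R i \<omega> = v}) - real n * q) / (p - q))
              = real (card {i. i < n \<and> x i = v})" .
  qed
  ultimately show ?thesis by blast
qed

end
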